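(* Let $t$ be an indeterminate and define polynomials $P_n,Y_n\in\mathbb{Z}[t]$ by $P_0=Y_0=1$ and, for $n\ge1$, $$P_n=(2t+1)P_{n-1}+2t(t+1)Y_{n-1},\qquad Y_n=2P_{n-1}+(2t+1)Y_{n-1}.$$ Put $y_n=\tfrac12(Y_n-1)$ and $$q_n=\frac{(P_n-Y_n)\big((2t^2+4t+1)Y_n+(2t+3)P_n\big)}{4(t^2+t-1)}.$$ Then for every $n\ge0$: $y_n\in\mathbb{Z}[t]$, $q_n\in\mathbb{Z}[t]$, $t(t+1)\,y_n(y_n+1)=p_n(p_n+1)$ with $p_n=\tfrac12(P_n-1)\in\mathbb{Z}[t]$, and $$y_n(y_n+1)\,y_{n+1}(y_{n+1}+1)=q_n(q_n+1).$$ *)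

theory Defs
  imports "HOL-Computational_Algebra.Polynomial"
begin

definition tt :: "int poly" where "tt = [:0, 1:]"

fun PY :: "nat \<Rightarrow> int poly \<times> int poly" where
  "PY 0 = (1, 1)"
| "PY (Suc n) = (let (P, Y) = PY n in
      ((2*tt + 1) * P + 2*tt*(tt + 1) * Y, 2 * P + (2*tt + 1) * Y))"

definition Pn :: "nat \<Rightarrow> int poly" where "Pn n = fst (PY n)"
definition Yn :: "nat \<Rightarrow> int poly" where "Yn n = snd (PY n)"

end

theory Submission
  imports Defs
begin

lemma A: fixes p y t :: "'a::idom"
  assumes "p*(p+1) = t*(t+1)*(y*(y+1))"
  shows "((2*t+1)*p + 2*(t*(t+1))*y + t + t*(t+1))*(((2*t+1)*p + 2*(t*(t+1))*y + t + t*(t+1))+1)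
     = t*(t+1)*((2*p + (2*t+1)*y + t + 1)*((2*p + (2*t+1)*y + t + 1)+1))"
  using assms by algebra
lemma B: fixes p y t :: "'a::idom"
  assumes "p*(p+1) = t*(t+1)*(y*(y+1))"
  shows "y*(y+1)*((2*p + (2*t+1)*y + t + 1)*((2*p + (2*t+1)*y + t + 1)+1))
     = ((2*t+1)*(y*y+y) + 2*p*y + p + y)*(((2*t+1)*(y*y+y) + 2*p*y + p + y)+1)"
  using assms by algebra
lemma C: fixes p y t :: "'a::idom"
  assumes "p*(p+1) = t*(t+1)*(y*(y+1))"
  shows "4*(t^2+t-1)*((2*t+1)*(y*y+y) + 2*p*y + p + y) =
   ((2*p+1) - (2*y+1))*((2*t^2+4*t+1)*(2*y+1) + (2*t+3)*(2*p+1))"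
  using assms by algebra

lemma PY_Suc: "Pn (Suc n) = (2*tt + 1) * Pn n + 2*tt*(tt + 1) * Yn n"
  "Yn (Suc n) = 2 * Pn n + (2*tt + 1) * Yn n"
  by (simp_all add: Pn_def Yn_def split: prod.splits)

lemma key: "\<exists>p y. Pn n = 2*p+1 \<and> Yn n = 2*y+1 \<and> p*(p+1) = tt*(tt+1)*(y*(y+1))"
proof (induction n)
  case 0
  show ?case by (rule exI[of _ 0], rule exI[of _ 0]) (simp add: Pn_def Yn_def)
next
  case (Suc n)
  then obtain p y where h: "Pn n = 2*p+1" "Yn n = 2*y+1" "p*(p+1) = tt*(tt+1)*(y*(y+1))" by blast
  show ?case
    apply (rule exI[of _ "(2*tt+1)*p + 2*(tt*(tt+1))*y + tt + tt*(tt+1)"])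
    apply (rule exI[of _ "2*p + (2*tt+1)*y + tt + 1"])
    using A[OF h(3)] by (simp add: PY_Suc h algebra_simps)
qed

theorem mainTheorem6:
  fixes n :: nat
  shows "\<exists>y y' p q :: int poly.
           Yn n = 2 * y + 1 \<and>
           Yn (Suc n) = 2 * y' + 1 \<and>
           Pn n = 2 * p + 1 \<and>
           4 * (tt^2 + tt - 1) * q =
             (Pn n - Yn n) * ((2*tt^2 + 4*tt + 1) * Yn n + (2*tt + 3) * Pn n) \<and>
           tt * (tt + 1) * (y * (y + 1)) = p * (p + 1) \<and>
           y * (y + 1) * (y' * (y' + 1)) = q * (q + 1)"
proof -
  obtain p y where h: "Pn n = 2*p+1" "Yn n = 2*y+1" "p*(p+1) = tt*(tt+1)*(y*(y+1))"
    using key by blast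
  show ?thesis
    apply (rule exI[of _ y], rule exI[of _ "2*p + (2*tt+1)*y + tt + 1"], rule exI[of _ p],
           rule exI[of _ "(2*tt+1)*(y*y+y) + 2*p*y + p + y"])
    using B[OF h(3)] C[OF h(3)] h by (simp add: PY_Suc algebra_simps)
qed

end
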